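(* For any $\lambda>0$ and any configuration $\eta$, $$\mathrm{w}^*_n = 2\sup\{\varepsilon\ge0:\ \mathcal V^{(1+\varepsilon)}\in\mathrm{cross}^*(n)\}$$ and $$\mathrm{w}_n\ \ge\ 2\sqrt{1-\inf\{r\le 1:\ \mathcal O^{(r)}\in \mathrm{cross}(n+\sqrt{1-r^2},\,n-1)\}^2},$$ where the supremum is taken to be $0$ and the infimum to be $1$ when the respective set is empty.
   Context: $\eta$ is a (locally finite) point configuration in $\mathbb R^2$ (a Poisson process of intensity $\lambda\cdot\mathrm{Leb}$ under $\mathbb P_\lambda$). For $r\ge0$, $\mathcal O^{(r)}=\bigcup_{x\in\mathrm{supp}(\eta)}B(x,r)$ and $\mathcal V^{(r)}=\mathbb R^2\setminus\mathcal O^{(r)}$; $\mathcal O=\mathcal O^{(1)}$, $\mathcal V=\mathcal V^{(1)}$. For a set $S$, "$S\in\mathrm{cross}(a,h)$" means $S$ contains a path inside $[-a,a]\times[-h,h]$ joining its left and right sides; $\mathrm{cross}(n)=\mathrm{cross}(n,n)$, and "$S\in\mathrm{cross}^*(n)$" means $S$ contains a path inside $[-n,n]^2$ joining its left and right sides. A horizontal crossing of $[-n,n]^2$ is a path in $[-n,n]^2$ joining $\{-n\}\times[-n,n]$ to $\{n\}\times[-n,n]$. $\mathrm{w}_n=2\sup_\gamma\mathrm{dist}(\gamma,\mathcal V)$ over horizontal crossings $\gamma\subset\mathcal O$ and $\mathrm{w}^*_n=2\sup_\gamma\mathrm{dist}(\gamma,\mathcal O)$ over horizontal crossings $\gamma\subset\mathcal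 V$ (each $0$ if no such crossing exists). *)

theory Defs
  imports "HOL-Analysis.Analysis"
begin

type_synonym pt = "real \<times> real"

text \<open>A point configuration eta, identified with its support: a locally finite set of points.\<close>
definition locally_finite_config :: "pt set \<Rightarrow> bool" where
  "locally_finite_config P \<longleftrightarrow> (\<forall>K. bounded K \<longrightarrow> finite (P \<inter> K))"

definition occ :: "pt set \<Rightarrow> real \<Rightarrow> pt set" where
  "occ P r = (\<Union>x\<in>P. cball x r)"

definition vac :: "pt set \<Rightarrow> real \<Rightarrow> pt set" where
  "vac P r = UNIV - occ P r"

definition rect :: "real \<Rightarrow> real \<Rightarrow> pt set" where
  "rect a h = {-a..a} \<times> {-h..h}"

definition cross :: "pt set \<Rightarrow> real \<Rightarrow> real \<Rightarrow> bool" where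
  "cross S a h \<longleftrightarrow> (\<exists>g. path g \<and> path_image g \<subseteq> S \<inter> rect a h
      \<and> fst (pathstart g) = -a \<and> fst (pathfinish g) = a)"

definition cross_star :: "pt set \<Rightarrow> real \<Rightarrow> bool" where
  "cross_star S n \<longleftrightarrow> (\<exists>g. path g \<and> path_image g \<subseteq> S \<inter> rect n n
      \<and> fst (pathstart g) = -n \<and> fst (pathfinish g) = n)"

definition hcrossing :: "real \<Rightarrow> (real \<Rightarrow> pt) \<Rightarrow> bool" where
  "hcrossing n g \<longleftrightarrow> path g \<and> path_image g \<subseteq> rect n n
      \<and> fst (pathstart g) = -n \<and> fst (pathfinish g) = n"

text \<open>Distance between sets, with values in the extended reals (infinite if one set is empty).\<close>
definition sdist :: "pt set \<Rightarrow> pt set \<Rightarrow> ereal" where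
  "sdist A B = Inf {ereal (dist x y) | x y. x \<in> A \<and> y \<in> B}"

definition w_occ :: "pt set \<Rightarrow> real \<Rightarrow> ereal" where
  "w_occ P n = (if \<exists>g. hcrossing n g \<and> path_image g \<subseteq> occ P 1
      then 2 * Sup {sdist (path_image g) (vac P 1) | g. hcrossing n g \<and> path_image g \<subseteq> occ P 1}
      else 0)"

definition w_vac :: "pt set \<Rightarrow> real \<Rightarrow> ereal" where
  "w_vac P n = (if \<exists>g. hcrossing n g \<and> path_image g \<subseteq> vac P 1
      then 2 * Sup {sdist (path_image g) (occ P 1) | g. hcrossing n g \<and> path_image g \<subseteq> vac P 1}
      else 0)"

end

theory Submission
  imports Defs
begin


lemma cross_star_iff: "cross_star S n \<longleftrightarrow> (\<exists>g. hcrossing n g \<and> path_image g \<subseteq> S)"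
  unfolding cross_star_def hcrossing_def by blast

lemma vac_mono: "1 \<le> t \<Longrightarrow> vac P t \<subseteq> vac P 1"
  unfolding vac_def occ_def by auto

lemma partA:
  assumes "path_image g \<subseteq> vac P 1" "0 \<le> e" "ereal e < sdist (path_image g) (occ P 1)"
  shows "path_image g \<subseteq> vac P (1+e)"
proof
  fix x assume x: "x \<in> path_image g"
  show "x \<in> vac P (1+e)"
  proof (rule ccontr)
    assume "x \<notin> vac P (1+e)"
    then obtain c where c: "c \<in> P" "dist c x \<le> 1+e" unfolding vac_def occ_def by auto
    have "x \<notin> occ P 1" using x assms(1) unfolding vac_def by auto
    hence d1: "dist c x > 1" using c(1) unfolding occ_def by force
    define d where "d = dist c x"
    define y where "y = c + (1/d) *\<^sub>R (x - c)"
    have nd: "norm (x - c) = d" by (simp add: d_def dist_norm norm_minus_commute)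
    have cx: "c \<noteq> x" using d1 by auto
    have "dist c y = 1" using d1 nd cx unfolding y_def d_def by (simp add: dist_norm)
    hence yo: "y \<in> occ P 1" using c(1) unfolding occ_def by force
    have "x - y = (1 - 1/d) *\<^sub>R (x - c)" unfolding y_def by (simp add: algebra_simps)
    moreover have "0 \<le> 1 - 1/d" using d1 unfolding d_def by (simp add: divide_le_eq)
    ultimately have "dist x y = (1 - 1/d) * d" using nd by (simp add: dist_norm)
    also have "\<dots> = d - 1" using d1 cx unfolding d_def by (simp add: field_simps)
    finally have dxy: "dist x y \<le> e" using c(2) unfolding d_def by simp
    have "sdist (path_image g) (occ P 1) \<le> ereal (dist x y)"
      unfolding sdist_def by (rule Inf_lower) (use x yo in blast)
    with dxy assms(3) show False by (meson ereal_less_eq(3) less_le_not_le order_trans)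
  qed
qed

lemma partB:
  assumes "path_image g \<subseteq> vac P (1+e)"
  shows "ereal e \<le> sdist (path_image g) (occ P 1)"
  unfolding sdist_def
proof (rule Inf_greatest, clarify)
  fix x y assume x: "x \<in> path_image g" and y: "y \<in> occ P 1"
  obtain c where c: "c \<in> P" "dist c y \<le> 1" using y unfolding occ_def by auto
  have "dist c x > 1 + e" using x assms c(1) unfolding vac_def occ_def by force
  moreover have "dist c x \<le> dist c y + dist y x" by (rule dist_triangle)
  ultimately show "ereal e \<le> ereal (dist x y)" using c(2) by (simp add: dist_commute)
qed

lemma part1:
  "w_vac P m = 2 * (let E = {\<epsilon>::real. \<epsilon> \<ge> 0 \<and> cross_star (vac P (1 + \<epsilon>)) m}
                in if E = {} then 0 else Sup (ereal ` E))"
proof -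
  define E where "E = {\<epsilon>::real. \<epsilon> \<ge> 0 \<and> cross_star (vac P (1 + \<epsilon>)) m}"
  show ?thesis
  proof (cases "\<exists>g. hcrossing m g \<and> path_image g \<subseteq> vac P 1")
    case True
    have E0: "0 \<in> E" using True unfolding E_def cross_star_iff by simp
    have "Sup {sdist (path_image g) (occ P 1) | g. hcrossing m g \<and> path_image g \<subseteq> vac P 1}
        = Sup (ereal ` E)"
    proof (rule antisym)
      show "Sup {sdist (path_image g) (occ P 1) | g. hcrossing m g \<and> path_image g \<subseteq> vac P 1}
        \<le> Sup (ereal ` E)"
      proof (rule Sup_least, clarify)
        fix g assume g: "hcrossing m g" "path_image g \<subseteq> vac P 1"
        show "sdist (path_image g) (occ P 1) \<le> Sup (ereal ` E)"
        proof (rule dense_le)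
          fix x assume x: "x < sdist (path_image g) (occ P 1)"
          show "x \<le> Sup (ereal ` E)"
          proof (cases "x < 0")
            case True
            have "ereal 0 \<le> Sup (ereal ` E)" using E0 by (simp add: Sup_upper)
            moreover have "x \<le> ereal 0" using less_imp_le[OF True] by (simp add: zero_ereal_def)
            ultimately show ?thesis by (rule order_trans[rotated])
          next
            case False
            then obtain e where xe: "x = ereal e" using x by (cases x) auto
            have "e \<ge> 0" using False xe by simp
            moreover have "path_image g \<subseteq> vac P (1+e)"
              using partA[OF g(2) \<open>e\<ge>0\<close>] x xe by simp
            ultimately have "e \<in> E" using g(1) unfolding E_def cross_star_iff by blast
            thus ?thesis using xe by (simp add: Sup_upper)
          qed
        qed
      qed
    next
      show "Sup (ereal ` E) \<le> Sup {sdist (path_image g) (occ P 1) | g. hcrossing m g \<and> path_image g \<subseteq> vac P 1}"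
      proof (rule Sup_least, clarify)
        fix e assume "e \<in> E"
        then obtain g where g: "hcrossing m g" "path_image g \<subseteq> vac P (1+e)" "e \<ge> 0"
          unfolding E_def cross_star_iff by blast
        have g1: "path_image g \<subseteq> vac P 1" using g(2) vac_mono[of "1+e" P] g(3) by auto
        have "ereal e \<le> sdist (path_image g) (occ P 1)"
          using partB[OF g(2)] by simp
        also have "\<dots> \<le> Sup {sdist (path_image g) (occ P 1) | g. hcrossing m g \<and> path_image g \<subseteq> vac P 1}"
          by (rule Sup_upper) (use g(1) g1 in blast)
        finally show "ereal e \<le> \<dots>" .
      qed
    qed
    thus ?thesis using True E0 unfolding w_vac_def E_def[symmetric] Let_def by auto
  next
    case False
    have "E = {}"
    proof (rule ccontr)
      assume "E \<noteq> {}"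
      then obtain e g where "e \<ge> 0" "hcrossing m g" "path_image g \<subseteq> vac P (1+e)"
        unfolding E_def cross_star_iff by blast
      thus False using False vac_mono[of "1+e" P] by auto
    qed
    thus ?thesis using False unfolding w_vac_def E_def[symmetric] Let_def by auto
  qed
qed



lemma lens:
  fixes c1 c2 p q :: "'a::real_inner"
  assumes "dist c1 c2 \<le> 2*r" "0 \<le> r" "r \<le> 1" "p \<in> closed_segment c1 c2"
    "dist p q \<le> sqrt (1 - r^2)"
  shows "dist c1 q \<le> 1 \<or> dist c2 q \<le> 1"
proof -
  obtain t where t: "0 \<le> t" "t \<le> 1" "p = (1-t) *\<^sub>R c1 + t *\<^sub>R c2"
    using assms(4) unfolding closed_segment_def by auto
  define u where "u = c2 - c1"
  define v where "v = q - p"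
  have q1: "q - c1 = t *\<^sub>R u + v" unfolding u_def v_def t(3) by (simp add: algebra_simps)
  have q2: "q - c2 = v - (1-t) *\<^sub>R u" unfolding u_def v_def t(3) by (simp add: algebra_simps)
  have e1: "(dist c1 q)^2 = t^2*(u\<bullet>u) + 2*t*(u\<bullet>v) + v\<bullet>v"
    unfolding dist_norm norm_minus_commute[of c1] power2_norm_eq_inner q1
    by (simp add: inner_add inner_commute power2_eq_square algebra_simps)
  have e2: "(dist c2 q)^2 = (1-t)^2*(u\<bullet>u) - 2*(1-t)*(u\<bullet>v) + v\<bullet>v"
    unfolding dist_norm norm_minus_commute[of c2] power2_norm_eq_inner q2
    by (simp add: inner_diff inner_commute power2_eq_square algebra_simps)
  have nu: "norm u \<le> 2*r" using assms(1) unfolding u_def by (simp add: dist_norm norm_minus_commute)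
  have uu: "u\<bullet>u \<le> 4*r^2"
  proof -
    have "u\<bullet>u = (norm u)^2" by (simp add: power2_norm_eq_inner)
    also have "\<dots> \<le> (2*r)^2" by (rule power_mono[OF nu norm_ge_zero])
    finally show ?thesis by (simp add: power_mult_distrib)
  qed
  have r1: "0 \<le> 1 - r^2" using assms(2,3) by (simp add: abs_square_le_1)
  have nv: "norm v \<le> sqrt (1 - r^2)" using assms(5) unfolding v_def by (simp add: dist_norm norm_minus_commute)
  have vv: "v\<bullet>v \<le> 1 - r^2"
  proof -
    have "v\<bullet>v = (norm v)^2" by (simp add: power2_norm_eq_inner)
    also have "\<dots> \<le> (sqrt (1 - r^2))^2" using nv by (simp add: power_mono)
    finally show ?thesis using r1 by simp
  qed
  have comb: "(1-t)*(dist c1 q)^2 + t*(dist c2 q)^2 = t*(1-t)*(u\<bullet>u) + v\<bullet>v"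
    unfolding e1 e2 by (simp add: algebra_simps power2_eq_square)
  have "t*(1-t) \<le> 1/4"
  proof -
    have "0 \<le> (t - 1/2)^2" by simp
    moreover have "(t - 1/2)^2 = t^2 - t + 1/4" by (simp add: power2_eq_square algebra_simps)
    moreover have "t*(1-t) = t - t^2" by (simp add: power2_eq_square algebra_simps)
    ultimately show ?thesis by linarith
  qed
  hence "t*(1-t)*(u\<bullet>u) \<le> 1/4 * (4*r^2)"
    using uu t(1,2) by (intro mult_mono) (auto simp: inner_ge_zero)
  hence le1: "(1-t)*(dist c1 q)^2 + t*(dist c2 q)^2 \<le> 1" using comb vv by simp
  show ?thesis
  proof (rule ccontr)
    assume "\<not> ?thesis"
    hence "(dist c1 q)^2 > 1" "(dist c2 q)^2 > 1"
      by (simp_all add: less_1_mult power2_eq_square)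
    then have a1: "(1-t)*((dist c1 q)^2 - 1) \<ge> 0" "t*((dist c2 q)^2 - 1) \<ge> 0"
      using t(1,2) by simp_all
    have "(1-t)*((dist c1 q)^2 - 1) > 0 \<or> t*((dist c2 q)^2 - 1) > 0"
      using t(1,2) \<open>(dist c1 q)^2 > 1\<close> \<open>(dist c2 q)^2 > 1\<close>
      by (cases "t = 0") auto
    hence "(1-t)*(dist c1 q)^2 + t*(dist c2 q)^2 > 1" using a1 by (auto simp: algebra_simps)
    thus False using le1 by simp
  qed
qed



lemma extract_crossing:
  fixes g :: "real \<Rightarrow> pt" and N :: real
  assumes g: "path g" and N: "0 < N" and St: "path_image g \<subseteq> {p. \<bar>snd p\<bar> \<le> N}"
    and g0: "fst (pathstart g) \<le> -N" and g1: "fst (pathfinish g) \<ge> N"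
  obtains h where "hcrossing N h" "path_image h \<subseteq> path_image g"
proof -
  define S1 where "S1 = {p::pt. fst p < N}"
  have oS1: "open S1" unfolding S1_def by (intro open_Collect_less continuous_intros)
  have cS1: "closure S1 \<subseteq> {p. fst p \<le> N}" unfolding S1_def
    by (intro closure_minimal closed_Collect_le continuous_intros) auto
  have "pathstart g \<in> closure S1" using g0 N closure_subset unfolding S1_def by fastforce
  moreover have "pathfinish g \<notin> S1" using g1 unfolding S1_def by auto
  ultimately obtain h1 where h1: "path h1" "pathstart h1 = pathstart g" "path_image h1 \<subseteq> path_image g"
    "path_image h1 - {pathfinish h1} \<subseteq> interior S1" "pathfinish h1 \<in> frontier S1"
    using exists_path_subpath_to_frontier[OF g] by blast
  have f1: "fst (pathfinish h1) = N"
    using h1(5) cS1 interior_open[OF oS1] unfolding frontier_def S1_def by auto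
  have h1img: "path_image h1 \<subseteq> {p. fst p \<le> N}"
  proof
    fix p assume "p \<in> path_image h1"
    thus "p \<in> {p. fst p \<le> N}"
      using h1(4) f1 interior_open[OF oS1] unfolding S1_def by (cases "p = pathfinish h1") auto
  qed
  define k where "k = reversepath h1"
  have k: "path k" "pathstart k = pathfinish h1" "pathfinish k = pathstart g" "path_image k = path_image h1"
    using h1 unfolding k_def by auto
  define S2 where "S2 = {p::pt. -N < fst p}"
  have oS2: "open S2" unfolding S2_def by (intro open_Collect_less continuous_intros)
  have cS2: "closure S2 \<subseteq> {p. -N \<le> fst p}" unfolding S2_def
    by (intro closure_minimal closed_Collect_le continuous_intros) auto
  have "pathstart k \<in> closure S2" using f1 k(2) N closure_subset unfolding S2_def by fastforce
  moreover have "pathfinish k \<notin> S2" using g0 k(3) unfolding S2_def by auto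
  ultimately obtain h2 where h2: "path h2" "pathstart h2 = pathstart k" "path_image h2 \<subseteq> path_image k"
    "path_image h2 - {pathfinish h2} \<subseteq> interior S2" "pathfinish h2 \<in> frontier S2"
    using exists_path_subpath_to_frontier[OF k(1)] by blast
  have f2: "fst (pathfinish h2) = -N"
    using h2(5) cS2 interior_open[OF oS2] unfolding frontier_def S2_def by auto
  have h2img: "path_image h2 \<subseteq> {p. -N \<le> fst p}"
  proof
    fix p assume "p \<in> path_image h2"
    thus "p \<in> {p. -N \<le> fst p}"
      using h2(4) f2 interior_open[OF oS2] unfolding S2_def by (cases "p = pathfinish h2") auto
  qed
  show ?thesis
  proof
    show "hcrossing N (reversepath h2)"
      unfolding hcrossing_def
    proof (intro conjI)
      show "path (reversepath h2)" using h2(1) by simp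
      show "path_image (reversepath h2) \<subseteq> rect N N"
      proof
        fix p assume "p \<in> path_image (reversepath h2)"
        hence p: "p \<in> path_image h2" by simp
        hence "p \<in> path_image g" using h2(3) k(4) h1(3) by auto
        thus "p \<in> rect N N" using p h2img h2(3) k(4) h1img St unfolding rect_def
          by (cases p) auto
      qed
      show "fst (pathstart (reversepath h2)) = - N" using f2 by simp
      show "fst (pathfinish (reversepath h2)) = N" using h2(2) k(2) f1 by simp
    qed
    show "path_image (reversepath h2) \<subseteq> path_image g" using h2(3) k(4) h1(3) by auto
  qed
qed



lemma part2_r:
  fixes P :: "pt set" and N r :: real
  assumes lf: "locally_finite_config P" and r: "0 \<le> r" "r \<le> 1"
    and cr: "cross (occ P r) (N + sqrt (1 - r^2)) (N - 1)"
  shows "ereal (2 * sqrt (1 - r^2)) \<le> w_occ P N"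
proof -
  define s where "s = sqrt (1 - r^2)"
  have r1: "0 \<le> 1 - r^2" using r by (simp add: abs_square_le_1)
  have s0: "0 \<le> s" "s \<le> 1" unfolding s_def using r1 r by auto
  obtain \<gamma> where \<gamma>: "path \<gamma>" "path_image \<gamma> \<subseteq> occ P r \<inter> rect (N+s) (N-1)"
      "fst (pathstart \<gamma>) = -(N+s)" "fst (pathfinish \<gamma>) = N+s"
    using cr unfolding cross_def s_def by blast
  define Z where "Z = path_image \<gamma>"
  have Zr: "\<forall>z\<in>Z. \<bar>snd z\<bar> \<le> N-1"
  proof
    fix z assume "z \<in> Z"
    hence "z \<in> rect (N+s) (N-1)" using \<gamma>(2) unfolding Z_def by auto
    thus "\<bar>snd z\<bar> \<le> N-1" unfolding rect_def by (cases z) auto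
  qed
  have z0Z: "pathstart \<gamma> \<in> Z" and z1Z: "pathfinish \<gamma> \<in> Z" unfolding Z_def by auto
  have N1: "N \<ge> 1" using Zr z0Z by force
  define D where "D = {p. \<forall>q. dist p q \<le> s \<longrightarrow> q \<in> occ P 1}"
  define St :: "pt set" where "St = snd -` {-N..N}"
  have convSt: "convex St" unfolding St_def
    by (rule convex_linear_vimage[OF linear_snd convex_real_interval(5)])
  have St_iff: "p \<in> St \<longleftrightarrow> \<bar>snd p\<bar> \<le> N" for p unfolding St_def by auto
  have segD: "closed_segment c c' \<subseteq> D" if "c \<in> P" "c' \<in> P" "dist c c' \<le> 2*r" for c c'
  proof
    fix p assume p: "p \<in> closed_segment c c'"
    show "p \<in> D" unfolding D_def
    proof (intro CollectI allI impI)
      fix q assume "dist p q \<le> s"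
      hence "dist c q \<le> 1 \<or> dist c' q \<le> 1"
        using lens[OF that(3) r p] unfolding s_def by blast
      thus "q \<in> occ P 1" using that(1,2) unfolding occ_def by auto
    qed
  qed
  have ballD: "p \<in> D" if "c \<in> P" "dist c p \<le> 1 - s" for c p
    unfolding D_def
  proof (intro CollectI allI impI)
    fix q assume "dist p q \<le> s"
    hence "dist c q \<le> 1" using that(2) dist_triangle[of c q p] by linarith
    thus "q \<in> occ P 1" using that(1) unfolding occ_def by auto
  qed
  have DO: "D \<subseteq> occ P 1" unfolding D_def using s0 by auto
  define K where "K = {c \<in> P. \<exists>z\<in>Z. dist c z \<le> r}"
  have "bounded Z" unfolding Z_def using \<gamma>(1) compact_imp_bounded compact_path_image by blast
  then obtain B where B: "\<forall>z\<in>Z. norm z \<le> B" unfolding bounded_iff by blast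
  have "K \<subseteq> P \<inter> cball 0 (B + r)"
  proof
    fix c assume "c \<in> K"
    then obtain z where z: "c \<in> P" "z \<in> Z" "dist c z \<le> r" unfolding K_def by auto
    have "norm c \<le> norm z + dist c z"
      using norm_triangle_ineq[of z "c - z"] by (simp add: dist_norm)
    thus "c \<in> P \<inter> cball 0 (B + r)" using B z by auto
  qed
  moreover have "finite (P \<inter> cball 0 (B + r))" using lf unfolding locally_finite_config_def by auto
  ultimately have finK: "finite K" by (rule finite_subset)
  have KSt: "c \<in> St" if cK: "c \<in> K" for c
  proof -
    obtain z where z: "z \<in> Z" "dist c z \<le> r" using cK unfolding K_def by blast
    have "dist (snd c) (snd z) \<le> dist c z" by (rule dist_snd_le)
    thus ?thesis using z Zr r unfolding St_iff dist_real_def by force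
  qed
  have KP: "K \<subseteq> P" unfolding K_def by auto
  have Zcov: "\<exists>c\<in>K. dist c z \<le> r" if "z \<in> Z" for z
  proof -
    have "z \<in> occ P r" using that \<gamma>(2) unfolding Z_def by auto
    then obtain c where "c \<in> P" "dist c z \<le> r" unfolding occ_def by auto
    thus ?thesis using that unfolding K_def by blast
  qed
  obtain cs where cs: "cs \<in> K" "dist cs (pathstart \<gamma>) \<le> r" using Zcov[OF z0Z] by blast
  define G where "G = {c \<in> K. \<exists>g. path g \<and> pathstart g = cs \<and> pathfinish g = c \<and> path_image g \<subseteq> D \<inter> St}"
  have csG: "cs \<in> G" unfolding G_def
  proof (intro CollectI conjI exI[of _ "linepath cs cs"])
    have "cs \<in> D" using ballD[of cs cs] cs(1) KP s0 by auto
    thus "path_image (linepath cs cs) \<subseteq> D \<inter> St" using KSt[OF cs(1)] by simp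
  qed (use cs(1) in auto)
  have Gstep: "c' \<in> G" if "c \<in> G" "c' \<in> K" "dist c c' \<le> 2*r" for c c'
  proof -
    note cG = that(1)
    obtain g where g: "path g" "pathstart g = cs" "pathfinish g = c" "path_image g \<subseteq> D \<inter> St"
      using cG unfolding G_def by blast
    have cK: "c \<in> K" using that(1) unfolding G_def by auto
    have seg: "closed_segment c c' \<subseteq> D \<inter> St"
      using segD[of c c'] cK that(2,3) KP closed_segment_subset[OF KSt[OF cK] KSt[OF that(2)] convSt]
      by auto
    show ?thesis unfolding G_def
    proof (intro CollectI conjI exI[of _ "g +++ linepath c c'"])
      show "path (g +++ linepath c c')" using g by simp
      show "path_image (g +++ linepath c c') \<subseteq> D \<inter> St"
        using path_image_join_subset[of g "linepath c c'"] g(4) seg by auto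
    qed (use g that(2) in auto)
  qed
  define U where "U = (\<Union>c\<in>G. cball c r)"
  define W where "W = (\<Union>c\<in>K-G. cball c r)"
  have GK: "G \<subseteq> K" unfolding G_def by auto
  have cU: "closed U" unfolding U_def using finK GK by (intro closed_UN) (auto intro: finite_subset)
  have cW: "closed W" unfolding W_def using finK by (intro closed_UN) auto
  have ZUW: "Z \<subseteq> U \<union> W" unfolding U_def W_def using Zcov by fastforce
  have UWd: "U \<inter> W \<inter> Z = {}"
  proof (rule ccontr)
    assume "U \<inter> W \<inter> Z \<noteq> {}"
    then obtain x c c' where "c \<in> G" "c' \<in> K" "c' \<notin> G" "dist c x \<le> r" "dist c' x \<le> r"
      unfolding U_def W_def by auto
    moreover have "dist c c' \<le> dist c x + dist c' x" using dist_triangle[of c c' x] by (simp add: dist_commute)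
    ultimately show False using Gstep by fastforce
  qed
  have "pathstart \<gamma> \<in> U" using cs csG unfolding U_def by (auto simp: mem_cball)
  hence UZ: "U \<inter> Z \<noteq> {}" using z0Z by blast
  have "connected Z" unfolding Z_def using \<gamma>(1) by (rule connected_path_image)
  hence "W \<inter> Z = {}" using cU cW ZUW UWd UZ unfolding connected_closed by blast
  hence "pathfinish \<gamma> \<in> U" using z1Z ZUW by auto
  then obtain ce where ce: "ce \<in> G" "dist ce (pathfinish \<gamma>) \<le> r" unfolding U_def by auto
  obtain g0 where g0: "path g0" "pathstart g0 = cs" "pathfinish g0 = ce" "path_image g0 \<subseteq> D \<inter> St"
    using ce(1) unfolding G_def by auto
  have ceK: "ce \<in> K" using ce(1) GK by auto
  define p0 where "p0 = cs - (1 - s, 0)"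
  define p1 where "p1 = ce + (1 - s, 0)"
  have dp0: "dist cs p0 = 1 - s" unfolding p0_def dist_norm using s0 by (simp add: norm_Pair)
  have dp1: "dist ce p1 = 1 - s" unfolding p1_def dist_norm using s0 by (simp add: norm_Pair)
  have p0St: "p0 \<in> St" using KSt[OF cs(1)] unfolding p0_def St_iff by simp
  have p1St: "p1 \<in> St" using KSt[OF ceK] unfolding p1_def St_iff by simp
  have seg0: "closed_segment p0 cs \<subseteq> D \<inter> St"
  proof -
    have "closed_segment p0 cs \<subseteq> cball cs (1-s) \<inter> St"
      using p0St KSt[OF cs(1)] dp0 s0
      by (intro closed_segment_subset convex_Int convex_cball convSt) auto
    note sub = this
    have cP: "cs \<in> P" using cs(1) KP by auto
    show ?thesis
    proof
      fix p assume "p \<in> closed_segment p0 cs"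
      hence "dist cs p \<le> 1-s" "p \<in> St" using sub by (auto simp del: Int_iff)
      thus "p \<in> D \<inter> St" using ballD[OF cP] by blast
    qed
  qed
  have seg1: "closed_segment ce p1 \<subseteq> D \<inter> St"
  proof -
    have "closed_segment ce p1 \<subseteq> cball ce (1-s) \<inter> St"
      using p1St KSt[OF ceK] dp1 s0
      by (intro closed_segment_subset convex_Int convex_cball convSt) auto
    note sub = this
    have cP: "ce \<in> P" using ceK KP by auto
    show ?thesis
    proof
      fix p assume "p \<in> closed_segment ce p1"
      hence "dist ce p \<le> 1-s" "p \<in> St" using sub by (auto simp del: Int_iff)
      thus "p \<in> D \<inter> St" using ballD[OF cP] by blast
    qed
  qed
  define \<Gamma> where "\<Gamma> = linepath p0 cs +++ (g0 +++ linepath ce p1)"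
  have p\<Gamma>: "path \<Gamma>" unfolding \<Gamma>_def using g0 by simp
  have l0: "path_image (linepath p0 cs) \<subseteq> D \<inter> St" using seg0 by simp
  have l1: "path_image (linepath ce p1) \<subseteq> D \<inter> St" using seg1 by simp
  have j1: "path_image (g0 +++ linepath ce p1) \<subseteq> D \<inter> St"
    by (rule order_trans[OF path_image_join_subset Un_least[OF g0(4) l1]])
  have i\<Gamma>: "path_image \<Gamma> \<subseteq> D \<inter> St" unfolding \<Gamma>_def
    by (rule order_trans[OF path_image_join_subset Un_least[OF l0 j1]])
  have "dist (fst cs) (fst (pathstart \<gamma>)) \<le> dist cs (pathstart \<gamma>)" by (rule dist_fst_le)
  hence f0: "fst (pathstart \<Gamma>) \<le> -N"
    using cs(2) \<gamma>(3) r unfolding \<Gamma>_def p0_def dist_real_def by auto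
  have "dist (fst ce) (fst (pathfinish \<gamma>)) \<le> dist ce (pathfinish \<gamma>)" by (rule dist_fst_le)
  hence f1: "fst (pathfinish \<Gamma>) \<ge> N"
    using ce(2) \<gamma>(4) r unfolding \<Gamma>_def p1_def dist_real_def by auto
  have "path_image \<Gamma> \<subseteq> {p. \<bar>snd p\<bar> \<le> N}" using i\<Gamma> St_iff by auto
  then obtain h where h: "hcrossing N h" "path_image h \<subseteq> path_image \<Gamma>"
    using extract_crossing[OF p\<Gamma> _ _ f0 f1] N1 by auto
  have hD: "path_image h \<subseteq> D" using h(2) i\<Gamma> by auto
  have sd: "ereal s \<le> sdist (path_image h) (vac P 1)"
    unfolding sdist_def
  proof (rule Inf_greatest, clarify)
    fix x y assume x: "x \<in> path_image h" and y: "y \<in> vac P 1"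
    have xD: "x \<in> D" using hD x by blast
    hence "\<forall>q. dist x q \<le> s \<longrightarrow> q \<in> occ P 1" unfolding D_def by (rule CollectD)
    moreover have "y \<notin> occ P 1" using y unfolding vac_def by simp
    ultimately have "\<not> dist x y \<le> s" by blast
    thus "ereal s \<le> ereal (dist x y)" by simp
  qed
  have ex: "\<exists>g. hcrossing N g \<and> path_image g \<subseteq> occ P 1" using h(1) hD DO by blast
  have "ereal (2 * s) = 2 * ereal s" by simp
  also have "\<dots> \<le> 2 * sdist (path_image h) (vac P 1)" using sd by (rule ereal_mult_left_mono) simp
  also have "\<dots> \<le> 2 * Sup {sdist (path_image g) (vac P 1) | g. hcrossing N g \<and> path_image g \<subseteq> occ P 1}"
    by (rule ereal_mult_left_mono, rule Sup_upper) (use h(1) hD DO in auto)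
  also have "\<dots> = w_occ P N" unfolding w_occ_def using ex by simp
  finally show ?thesis unfolding s_def .
qed

lemma w_occ_nonneg: "0 \<le> w_occ P m"
proof -
  have sd: "0 \<le> sdist A B" for A B unfolding sdist_def by (rule Inf_greatest) auto
  show ?thesis
  proof (cases "\<exists>g. hcrossing m g \<and> path_image g \<subseteq> occ P 1")
    case True
    then obtain g where g: "hcrossing m g" "path_image g \<subseteq> occ P 1" by blast
    have "0 \<le> sdist (path_image g) (vac P 1)" by (rule sd)
    also have "\<dots> \<le> Sup {sdist (path_image g) (vac P 1) | g. hcrossing m g \<and> path_image g \<subseteq> occ P 1}"
      by (rule Sup_upper) (use g in blast)
    finally show ?thesis unfolding w_occ_def using True by simp
  next
    case False
    thus ?thesis unfolding w_occ_def by (subst if_not_P) auto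
  qed
qed

lemma part2:
  fixes P :: "pt set" and N :: real
  assumes lf: "locally_finite_config P"
  shows "w_occ P N \<ge>
           ereal (2 * sqrt (1 - (let R = {r::real. 0 \<le> r \<and> r \<le> 1 \<and>
                      cross (occ P r) (N + sqrt (1 - r\<^sup>2)) (N - 1)}
                 in if R = {} then 1 else Inf R)\<^sup>2))"
proof -
  define R where "R = {r::real. 0 \<le> r \<and> r \<le> 1 \<and> cross (occ P r) (N + sqrt (1 - r\<^sup>2)) (N - 1)}"
  have w0: "0 \<le> w_occ P N" by (rule w_occ_nonneg)
  show ?thesis
  proof (cases "R = {}")
    case True
    thus ?thesis using w0 unfolding R_def[symmetric] Let_def by (simp add: zero_ereal_def)
  next
    case False
    define r0 where "r0 = Inf R"
    have bdd: "bdd_below R" unfolding R_def by (rule bdd_belowI[of _ 0]) auto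
    have r0: "0 \<le> r0" "r0 \<le> 1"
    proof -
      obtain r where r: "r \<in> R" using False by blast
      show "r0 \<le> 1" unfolding r0_def using cInf_lower[OF r bdd] r unfolding R_def by auto
      show "0 \<le> r0" unfolding r0_def using False by (rule cInf_greatest) (auto simp: R_def)
    qed
    have key: "ereal (2 * sqrt (1 - r0^2)) \<le> w_occ P N"
    proof (cases "w_occ P N")
      case PInf thus ?thesis by simp
    next
      case MInf thus ?thesis using w0 by simp
    next
      case (real w)
      have w: "0 \<le> w" using w0 real by simp
      define m where "m = sqrt (max 0 (1 - (w/2)^2))"
      have "m \<le> r" if "r \<in> R" for r
      proof -
        have rr: "0 \<le> r" "r \<le> 1" "cross (occ P r) (N + sqrt (1 - r\<^sup>2)) (N - 1)" using that unfolding R_def by auto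
        have "ereal (2 * sqrt (1 - r^2)) \<le> ereal w" using part2_r[OF lf rr] real by simp
        hence sw: "sqrt (1 - r^2) \<le> w/2" by simp
        have r1: "0 \<le> 1 - r^2" using mult_le_one[of r r] rr by (simp add: power2_eq_square)
        have "(sqrt (1 - r^2))^2 \<le> (w/2)^2" using sw by (rule power_mono) (use r1 in simp)
        moreover note r1
        ultimately have "1 - (w/2)^2 \<le> r^2" by simp
        hence "max 0 (1 - (w/2)^2) \<le> r^2" by simp
        hence "m \<le> sqrt (r^2)" unfolding m_def by (rule real_sqrt_le_mono)
        thus ?thesis using rr by simp
      qed
      hence "m \<le> r0" unfolding r0_def using False by (intro cInf_greatest) auto
      hence "m^2 \<le> r0^2" by (rule power_mono) (simp add: m_def)
      hence "1 - (w/2)^2 \<le> r0^2" unfolding m_def by simp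
      hence "1 - r0^2 \<le> (w/2)^2" by simp
      hence "sqrt (1 - r0^2) \<le> sqrt ((w/2)^2)" by (rule real_sqrt_le_mono)
      hence "sqrt (1 - r0^2) \<le> w/2" using w by simp
      thus ?thesis using real by simp
    qed
    thus ?thesis using False unfolding R_def[symmetric] Let_def r0_def by simp
  qed
qed

theorem lemma3p1:
  fixes P :: "pt set" and n :: nat
  assumes "locally_finite_config P"
  shows "(w_vac P (real n) =
           2 * (let E = {\<epsilon>::real. \<epsilon> \<ge> 0 \<and> cross_star (vac P (1 + \<epsilon>)) (real n)}
                in if E = {} then 0 else Sup (ereal ` E))) \<and>
         (w_occ P (real n) \<ge>
           ereal (2 * sqrt (1 - (let R = {r::real. 0 \<le> r \<and> r \<le> 1 \<and>
                      cross (occ P r) (real n + sqrt (1 - r\<^sup>2)) (real n - 1)}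
                 in if R = {} then 1 else Inf R)\<^sup>2)))"
proof (rule conjI)
  show "w_vac P (real n) =
           2 * (let E = {\<epsilon>::real. \<epsilon> \<ge> 0 \<and> cross_star (vac P (1 + \<epsilon>)) (real n)}
                in if E = {} then 0 else Sup (ereal ` E))" by (rule part1)
  show "w_occ P (real n) \<ge>
           ereal (2 * sqrt (1 - (let R = {r::real. 0 \<le> r \<and> r \<le> 1 \<and>
                      cross (occ P r) (real n + sqrt (1 - r\<^sup>2)) (real n - 1)}
                 in if R = {} then 1 else Inf R)\<^sup>2))" by (rule part2[OF assms])
qed

end
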